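(* Let $Q=(V,E)$ be a natural join query over binary relations, and let $I$ be an instance in which every relation has at most $N\ge1$ tuples. Let $T_0=R_0^I$ for some relation $R_0\in E$. For $j=0,\dots,m-1$, let $T_{j+1}=T_j\bowtie R_j^I$, where $R_j(X_j,Y_j)\in E$ is a relation such that $X_j$ is an attribute of $T_j$ and $R_j^I$ is light in $X_j$. Let $k$ be the number of distinct attributes of $T_m$. Then $$|T_m|\le N^{k/2}\le\mathrm{AGM}(Q).$$
   Context: A natural join query over binary relations consists of relation symbols, each having exactly two distinct attributes; relations are sets of tuples. The query graph $(V,E)$ has one vertex per attribute and one edge per relation. For a relation $R$ with attribute $X$ and a value $a$, the degree is $d_R(a)=|\{t\in R:t.X=a\}|$. $R$ is light in $X$ if $d_R(a)\le\sqrt N$ for every value $a$. A fractional vertex packing is a map $u:V\to[0,1]$ with $u_x+u_y\le 1$ for every edge $\{x,y\}\in E$. Define $\mathrm{AGM}(Q)=\max_u N^{\sum_{x\in V}u_x}$, the maximum taken over fractional vertex packings $u$. *)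

theory Defs
  imports Complex_Main
begin

(* Tuples over an attribute set A are partial maps with domain exactly A.
   A query is a set E of relation symbols; att r = (x,y) gives the two
   (distinct) attributes of r. *)

definition query_vertices :: "'r set \<Rightarrow> ('r \<Rightarrow> 'a \<times> 'a) \<Rightarrow> 'a set" where
  "query_vertices E att = (\<Union>r\<in>E. {fst (att r), snd (att r)})"

definition is_instance :: "'r set \<Rightarrow> ('r \<Rightarrow> 'a \<times> 'a) \<Rightarrow> ('r \<Rightarrow> ('a \<rightharpoonup> 'v) set) \<Rightarrow> bool" where
  "is_instance E att I \<longleftrightarrow>
     (\<forall>r\<in>E. finite (I r) \<and> (\<forall>t\<in>I r. dom t = {fst (att r), snd (att r)}))"

definition njoin :: "'a set \<Rightarrow> ('a \<rightharpoonup> 'v) set \<Rightarrow> 'a set \<Rightarrow> ('a \<rightharpoonup> 'v) set \<Rightarrow> ('a \<rightharpoonup> 'v) set" where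
  "njoin A T B S = {t. dom t = A \<union> B \<and> t |` A \<in> T \<and> t |` B \<in> S}"

definition degree :: "('a \<rightharpoonup> 'v) set \<Rightarrow> 'a \<Rightarrow> 'v \<Rightarrow> nat" where
  "degree R X a = card {t \<in> R. t X = Some a}"

definition light_in :: "real \<Rightarrow> ('a \<rightharpoonup> 'v) set \<Rightarrow> 'a \<Rightarrow> bool" where
  "light_in N R X \<longleftrightarrow> (\<forall>a. real (degree R X a) \<le> sqrt N)"

definition fractional_vertex_packing :: "'r set \<Rightarrow> ('r \<Rightarrow> 'a \<times> 'a) \<Rightarrow> ('a \<Rightarrow> real) \<Rightarrow> bool" where
  "fractional_vertex_packing E att u \<longleftrightarrow>
     (\<forall>x\<in>query_vertices E att. 0 \<le> u x \<and> u x \<le> 1) \<and>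
     (\<forall>r\<in>E. u (fst (att r)) + u (snd (att r)) \<le> 1)"

definition AGM :: "real \<Rightarrow> 'r set \<Rightarrow> ('r \<Rightarrow> 'a \<times> 'a) \<Rightarrow> real" where
  "AGM N E att = (SUP u \<in> {u. fractional_vertex_packing E att u}.
                    N powr (\<Sum>x\<in>query_vertices E att. u x))"

end

theory Submission
  imports Defs
begin

lemma restrict_eq_ext:
  assumes "dom t = A \<union> B" "dom t' = A \<union> B" "t |` A = t' |` A" "t |` B = t' |` B"
  shows "t = t'"
proof
  fix z
  show "t z = t' z"
  proof (cases "z \<in> A")
    case True
    then show ?thesis using fun_cong[OF assms(3), of z] by (simp add: restrict_map_def)
  next
    case False
    show ?thesis
    proof (cases "z \<in> B")
      case True
      then show ?thesis using fun_cong[OF assms(4), of z] by (simp add: restrict_map_def)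
    next
      case False
      then have "z \<notin> dom t" "z \<notin> dom t'" using assms(1,2) \<open>z \<notin> A\<close> by auto
      then show ?thesis by (simp add: domIff)
    qed
  qed
qed

lemma join_step:
  fixes T S :: "('a \<rightharpoonup> 'v) set" and c :: real
  assumes finT: "finite T" and domT: "\<forall>t\<in>T. dom t = A"
    and finS: "finite S" and domS: "\<forall>t\<in>S. dom t = B"
    and xA: "x \<in> A" and xB: "x \<in> B"
    and deg: "\<forall>a. real (degree S x a) \<le> c"
  shows "finite (njoin A T B S) \<and> (B \<subseteq> A \<longrightarrow> card (njoin A T B S) \<le> card T)
     \<and> real (card (njoin A T B S)) \<le> real (card T) * c"
proof -
  let ?J = "njoin A T B S"
  let ?f = "\<lambda>t. (t |` A, t |` B)"
  let ?S = "Sigma T (\<lambda>s. {r\<in>S. r x = s x})"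
  have inj: "inj_on ?f ?J"
    by (rule inj_onI) (auto simp: njoin_def intro: restrict_eq_ext)
  have img: "?f ` ?J \<subseteq> ?S"
  proof
    fix p assume "p \<in> ?f ` ?J"
    then obtain t where t: "t \<in> ?J" "p = ?f t" by auto
    have "(t |` B) x = (t |` A) x" using xA xB by (simp add: restrict_map_def)
    then show "p \<in> ?S" using t by (auto simp: njoin_def)
  qed
  have finSig: "finite ?S" using finT finS by auto
  have finJ: "finite ?J"
    using finite_imageD[OF finite_subset[OF img finSig] inj] .
  have c1: "card ?J \<le> card ?S"
    using card_inj_on_le[OF inj img finSig] .
  have c2: "card ?S = (\<Sum>s\<in>T. card {r\<in>S. r x = s x})"
    using finT finS by (simp add: card_SigmaI)
  have c3: "real (card {r\<in>S. r x = s x}) \<le> c" if "s \<in> T" for s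
  proof -
    have "x \<in> dom s" using domT that xA by auto
    then obtain a where "s x = Some a" by auto
    then show ?thesis using deg[rule_format, of a] by (simp add: degree_def)
  qed
  have "real (card ?J) \<le> real (card ?S)" using c1 by simp
  also have "\<dots> = (\<Sum>s\<in>T. real (card {r\<in>S. r x = s x}))" using c2 by simp
  also have "\<dots> \<le> (\<Sum>s\<in>T. c)" using c3 by (intro sum_mono) auto
  also have "\<dots> = real (card T) * c" by simp
  finally have main: "real (card ?J) \<le> real (card T) * c" .
  have "B \<subseteq> A \<longrightarrow> card ?J \<le> card T"
  proof
    assume "B \<subseteq> A"
    then have "?J \<subseteq> T"
    proof -
      have "t |` A = t" if "dom t = A" for t :: "'a \<rightharpoonup> 'v"
        using that by (auto simp: restrict_map_def domIff fun_eq_iff)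
      then show ?thesis using \<open>B \<subseteq> A\<close> by (auto simp: njoin_def Un_absorb2)
    qed
    then show "card ?J \<le> card T" using finT by (simp add: card_mono)
  qed
  then show ?thesis using finJ main by blast
qed

theorem mainTheorem4:
  fixes E :: "'r set" and att :: "'r \<Rightarrow> 'a \<times> 'a"
    and I :: "'r \<Rightarrow> ('a \<rightharpoonup> 'v) set" and N :: real
    and R0 :: 'r and R :: "nat \<Rightarrow> 'r" and X :: "nat \<Rightarrow> 'a"
    and T :: "nat \<Rightarrow> ('a \<rightharpoonup> 'v) set" and A :: "nat \<Rightarrow> 'a set" and m :: nat
  assumes finE: "finite E"
    and distinct_att: "\<forall>r\<in>E. fst (att r) \<noteq> snd (att r)"
    and inst: "is_instance E att I"
    and N_ge: "N \<ge> 1"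
    and sizes: "\<forall>r\<in>E. real (card (I r)) \<le> N"
    and R0_in: "R0 \<in> E"
    and T0: "T 0 = I R0" and A0: "A 0 = {fst (att R0), snd (att R0)}"
    and R_in: "\<forall>j<m. R j \<in> E"
    and X_att: "\<forall>j<m. X j \<in> {fst (att (R j)), snd (att (R j))}"
    and X_in_T: "\<forall>j<m. X j \<in> A j"
    and light: "\<forall>j<m. light_in N (I (R j)) (X j)"
    and A_step: "\<forall>j<m. A (Suc j) = A j \<union> {fst (att (R j)), snd (att (R j))}"
    and T_step: "\<forall>j<m. T (Suc j) = njoin (A j) (T j) {fst (att (R j)), snd (att (R j))} (I (R j))"
  shows "real (card (T m)) \<le> N powr (real (card (A m)) / 2)
       \<and> N powr (real (card (A m)) / 2) \<le> AGM N E att"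
proof -
  define V where "V = query_vertices E att"
  have finV: "finite V" using finE by (simp add: V_def query_vertices_def)
  have inv: "j \<le> m \<Longrightarrow> finite (T j) \<and> (\<forall>t\<in>T j. dom t = A j) \<and> finite (A j) \<and> A j \<subseteq> V
      \<and> real (card (T j)) \<le> N powr (real (card (A j)) / 2)" for j
  proof (induction j)
    case 0
    have "card (A 0) = 2" using A0 distinct_att R0_in by auto
    then have "N powr (real (card (A 0)) / 2) = N" using N_ge by simp
    then show ?case using inst R0_in sizes T0 A0
      by (auto simp: is_instance_def V_def query_vertices_def)
  next
    case (Suc j)
    then have jm: "j < m" and IH: "finite (T j) \<and> (\<forall>t\<in>T j. dom t = A j) \<and> finite (A j) \<and> A j \<subseteq> V
      \<and> real (card (T j)) \<le> N powr (real (card (A j)) / 2)" by auto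
    define B where "B = {fst (att (R j)), snd (att (R j))}"
    have Rj: "R j \<in> E" using R_in jm by auto
    have finS: "finite (I (R j))" and domS: "\<forall>t\<in>I (R j). dom t = B"
      using inst Rj by (auto simp: is_instance_def B_def)
    have deg: "\<forall>a. real (degree (I (R j)) (X j) a) \<le> sqrt N"
      using light jm by (simp add: light_in_def)
    have xA: "X j \<in> A j" and xB: "X j \<in> B" using X_in_T X_att jm B_def by auto
    have TS: "T (Suc j) = njoin (A j) (T j) B (I (R j))" using T_step jm B_def by auto
    have AS: "A (Suc j) = A j \<union> B" using A_step jm B_def by auto
    have BV: "B \<subseteq> V" using Rj by (auto simp: B_def V_def query_vertices_def)
    note js = join_step[OF _ _ finS domS xA xB deg, of "T j"]
    have fin': "finite (T (Suc j))" using js IH TS by auto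
    have dom': "\<forall>t\<in>T (Suc j). dom t = A (Suc j)" using TS AS by (auto simp: njoin_def)
    have bound: "real (card (T (Suc j))) \<le> N powr (real (card (A (Suc j))) / 2)"
    proof (cases "B \<subseteq> A j")
      case True
      then have "A (Suc j) = A j" using AS by auto
      moreover have "card (T (Suc j)) \<le> card (T j)" using js IH TS True by auto
      ultimately show ?thesis using IH by simp
    next
      case False
      then obtain y where y: "y \<in> B" "y \<notin> A j" by auto
      have "B \<subseteq> insert y (A j)"
        using xA xB y unfolding B_def by auto
      then have "A (Suc j) = insert y (A j)" using AS y by auto
      then have cA: "real (card (A (Suc j))) = real (card (A j)) + 1" using IH y by simp
      have "N powr (real (card (A (Suc j))) / 2) = N powr (real (card (A j)) / 2) * N powr (1/2)"
        unfolding cA by (simp add: powr_add[symmetric] add_divide_distrib)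
      also have "\<dots> = N powr (real (card (A j)) / 2) * sqrt N"
        using N_ge by (simp add: powr_half_sqrt)
      finally have eq: "N powr (real (card (A (Suc j))) / 2) = N powr (real (card (A j)) / 2) * sqrt N" .
      have "real (card (T (Suc j))) \<le> real (card (T j)) * sqrt N" using js IH TS by auto
      also have "\<dots> \<le> N powr (real (card (A j)) / 2) * sqrt N"
        using IH N_ge by (intro mult_right_mono) auto
      finally show ?thesis using eq by simp
    qed
    show ?case using fin' dom' bound IH AS BV by (auto simp: B_def)
  qed
  from inv[of m] have I1: "real (card (T m)) \<le> N powr (real (card (A m)) / 2)"
    and AV: "A m \<subseteq> V" by auto
  define u :: "'a \<Rightarrow> real" where "u = (\<lambda>_. 1/2)"
  have fvp: "fractional_vertex_packing E att u" by (simp add: fractional_vertex_packing_def u_def)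
  have sumu: "(\<Sum>x\<in>V. u x) = real (card V) / 2" by (simp add: u_def)
  have "N powr (real (card (A m)) / 2) \<le> N powr (real (card V) / 2)"
    using N_ge card_mono[OF finV AV] by (intro powr_mono) auto
  also have "\<dots> \<le> AGM N E att"
    unfolding AGM_def
  proof (rule cSUP_upper2)
    show "u \<in> {u. fractional_vertex_packing E att u}" using fvp by simp
    show "N powr (real (card V) / 2) \<le> N powr (\<Sum>x\<in>query_vertices E att. u x)"
      using sumu unfolding V_def by (simp only:)
    show "bdd_above ((\<lambda>u. N powr (\<Sum>x\<in>query_vertices E att. u x)) ` {u. fractional_vertex_packing E att u})"
    proof (rule bdd_aboveI2)
      fix w assume "w \<in> {u. fractional_vertex_packing E att u}"
      then have "\<forall>x\<in>V. w x \<le> 1" by (simp add: fractional_vertex_packing_def V_def)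
      then have "(\<Sum>x\<in>V. w x) \<le> (\<Sum>x\<in>V. 1)" by (intro sum_mono) auto
      then show "N powr (\<Sum>x\<in>query_vertices E att. w x) \<le> N powr (real (card V))"
        using N_ge V_def by (intro powr_mono) auto
    qed
  qed
  finally show ?thesis using I1 by simp
qed

end
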